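(* Let $G=\{1,\dots,d\}^m$ and let $A\subseteq G$ satisfy $\mathsf{DAff}(A)=A$. If $\frac{|A|}{d^m}\ge\frac12$, then $$\dim\mathsf{Aff}(G)-\dim\mathsf{Aff}(A)\le 2d\,\frac{d^m-|A|}{d^m}.$$
   Context: For $z\in G$, $\sigma(z)\in\{0,1\}^{md}$ is the concatenation of the one-hot encodings of $z_1,\dots,z_m$. For $A\subseteq G$, $\mathsf{Aff}(A)\subseteq\mathbb{R}^{md}$ is the affine hull of $\{\sigma(z):z\in A\}$, and $\mathsf{DAff}(A)=\{z\in G:\sigma(z)\in\mathsf{Aff}(A)\}$ is the discrete affine hull. *)

theory Defs
  imports "HOL-Analysis.Analysis"
begin

text \<open>The grid G = [d]^m is rendered as the type of all functions 'm \<Rightarrow> 'd,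
  where 'm is a finite type with m = CARD('m) elements (coordinates) and
  'd is a finite type with d = CARD('d) elements (the alphabet {1..d}).\<close>

definition sigma :: "('m::finite \<Rightarrow> 'd::finite) \<Rightarrow> real ^ ('m \<times> 'd)" where
  "sigma z = (\<chi> p. if z (fst p) = snd p then 1 else 0)"

definition Aff :: "('m::finite \<Rightarrow> 'd::finite) set \<Rightarrow> (real ^ ('m \<times> 'd)) set" where
  "Aff A = affine hull (sigma ` A)"

definition DAff :: "('m::finite \<Rightarrow> 'd::finite) set \<Rightarrow> ('m \<Rightarrow> 'd) set" where
  "DAff A = {z. sigma z \<in> Aff A}"

end

theory Submission imports Defs begin

definition Gr :: "'m set \<Rightarrow> ('m \<Rightarrow> 'd) \<Rightarrow> ('m \<Rightarrow> 'd) set" where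
  "Gr I z0 = {z. \<forall>j. j \<notin> I \<longrightarrow> z j = z0 j}"

lemma sigma_nth: "sigma z $ p = (if z (fst p) = snd p then 1 else 0)"
  by (simp add: sigma_def)

lemma delta_h: "(\<Sum>x\<in>(UNIV::'a::finite set). (if a = x \<and> P x then (1::real) else 0)) = (if P a then 1 else 0)"
proof -
  have "(\<Sum>x\<in>(UNIV::'a set). (if a = x \<and> P x then (1::real) else 0)) = (\<Sum>x\<in>UNIV. if a = x then (if P x then 1 else 0) else 0)"
    by (rule sum.cong) auto
  then show ?thesis by simp
qed

lemma ext_dim:
  fixes S :: "('m::finite \<Rightarrow> 'd::finite) set"
  assumes "finite F" "\<forall>a\<in>F. P a i = a \<and> a \<noteq> b" "\<forall>z\<in>S. z i = b"
  shows "aff_dim (sigma ` (S \<union> P ` F)) = aff_dim (sigma ` S) + int (card F)"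
  using assms
proof (induction F rule: finite_induct)
  case empty
  show ?case by simp
next
  case (insert a F)
  have aff: "affine {x::real^('m\<times>'d). x $ (i,a) = 0}"
    using affine_hyperplane[of "axis (i,a) 1" 0] by (simp add: cart_eq_inner_axis inner_commute)
  have "affine hull (sigma ` (S \<union> P ` F)) \<subseteq> {x. x $ (i,a) = 0}"
    apply (rule hull_minimal) prefer 2 apply (rule aff)
    using insert by (auto simp: sigma_nth)
  moreover have "sigma (P a) $ (i,a) = 1" using insert by (simp add: sigma_nth)
  ultimately have "sigma (P a) \<notin> affine hull (sigma ` (S \<union> P ` F))" by auto
  then have "aff_dim (insert (sigma (P a)) (sigma ` (S \<union> P ` F))) = aff_dim (sigma ` (S \<union> P ` F)) + 1"
    by (simp add: aff_dim_insert)
  moreover have "sigma ` (S \<union> P ` insert a F) = insert (sigma (P a)) (sigma ` (S \<union> P ` F))" by auto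
  ultimately show ?case using insert by simp
qed

lemma upper:
  "aff_dim (sigma ` (UNIV::('m::finite \<Rightarrow> 'd::finite) set)) \<le> int ((CARD('d) - 1) * CARD('m))"
proof -
  define z0 :: "'m \<Rightarrow> 'd" where "z0 = (\<lambda>_. undefined)"
  define D where "D = (SIGMA j:(UNIV::'m set). UNIV - {z0 j})"
  define B where "B = (\<lambda>(j,c). axis (j,c) (1::real) - axis (j, z0 j) 1) ` D"
  have cD: "card D = (CARD('d) - 1) * CARD('m)"
    unfolding D_def by (simp add: card_Diff_singleton)
  have fB: "finite B" unfolding B_def D_def by simp
  have cB: "card B \<le> card D" unfolding B_def by (rule card_image_le) (simp add: D_def)
  have eq: "sigma z - sigma z0 = (\<Sum>j\<in>UNIV. axis (j, z j) 1 - axis (j, z0 j) 1)" for z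
    by (rule vec_eq_iff[THEN iffD2], rule allI) (auto simp: sigma_nth axis_def sum_subtractf delta_h split: prod.splits)
  have "sigma z - sigma z0 \<in> span B" for z
  proof -
    have "axis (j, z j) 1 - axis (j, z0 j) 1 \<in> span B" for j
    proof (cases "z j = z0 j")
      case True then show ?thesis by (simp add: span_zero)
    next
      case False
      then have "axis (j, z j) 1 - axis (j, z0 j) 1 \<in> B" unfolding B_def D_def by force
      then show ?thesis by (rule span_base)
    qed
    then show ?thesis unfolding eq by (intro span_sum) auto
  qed
  then have sub: "(+) (- sigma z0) ` sigma ` UNIV \<subseteq> span B" by auto
  have "aff_dim (sigma ` (UNIV::('m \<Rightarrow> 'd) set)) = int (dim ((+) (- sigma z0) ` sigma ` UNIV))"
    by (rule aff_dim_eq_dim) (simp add: hull_inc)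
  also have "\<dots> \<le> int (card B)" using dim_le_card[OF sub fB] by simp
  also have "\<dots> \<le> int ((CARD('d) - 1) * CARD('m))" using cB cD by (simp only: of_nat_le_iff)
  finally show ?thesis .
qed


lemma main:
  fixes I :: "'m::finite set"
  shows "\<forall>(z0::'m \<Rightarrow> 'd::finite) A. A \<subseteq> Gr I z0 \<longrightarrow> real CARD('d) ^ card I \<le> 2 * real (card A) \<longrightarrow>
    real ((CARD('d) - 1) * card I) - real_of_int (aff_dim (sigma ` A))
    \<le> 2 * real CARD('d) * ((real CARD('d) ^ card I - real (card A)) / real CARD('d) ^ card I)"
proof -
  have "finite I" by simp
  then show ?thesis
  proof (induction I rule: finite_induct)
    case empty
    show ?case
    proof (intro allI impI)
      fix z0 :: "'m \<Rightarrow> 'd" and A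
      assume A: "A \<subseteq> Gr {} z0" and c: "real CARD('d) ^ card ({}::'m set) \<le> 2 * real (card A)"
      have "Gr {} z0 = {z0}" by (auto simp: Gr_def)
      then have "A \<subseteq> {z0}" using A by simp
      moreover have "A \<noteq> {}" using c by auto
      ultimately have "A = {z0}" by blast
      then show "real ((CARD('d) - 1) * card ({}::'m set)) - real_of_int (aff_dim (sigma ` A))
        \<le> 2 * real CARD('d) * ((real CARD('d) ^ card ({}::'m set) - real (card A)) / real CARD('d) ^ card ({}::'m set))"
        by simp
    qed
  next
    case (insert i I)
    show ?case
    proof (intro allI impI)
      fix z0 :: "'m \<Rightarrow> 'd" and A
      assume A: "A \<subseteq> Gr (insert i I) z0" and c: "real CARD('d) ^ card (insert i I) \<le> 2 * real (card A)"
      define d where "d = CARD('d)"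
      define N where "N = real d ^ card I"
      define k where "k = card I"
      define n where "n = (\<lambda>a. card {z\<in>A. z i = a})"
      define M where "M = Max (range n)"
      define T where "T = {a. 0 < n a}"
      have d0: "d > 0" unfolding d_def by simp
      have N0: "N > 0" unfolding N_def using d0 by simp
      have cI: "card (insert i I) = k + 1" using insert k_def by simp
      have c2: "real d * N \<le> 2 * real (card A)" using c cI unfolding N_def d_def k_def by simp
      have Aeq: "A = (\<Union>a\<in>UNIV. {z\<in>A. z i = a})" by auto
      have "card (\<Union>a\<in>UNIV. {z\<in>A. z i = a}) = (\<Sum>a\<in>UNIV. card {z\<in>A. z i = a})"
        by (rule card_UN_disjoint) auto
      then have cA: "card A = (\<Sum>a\<in>UNIV. n a)" unfolding n_def using Aeq[symmetric] by simp
      have "M \<in> range n" unfolding M_def by (rule Max_in) auto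
      then obtain b where b: "n b = M" by auto
      have nM: "n a \<le> M" for a unfolding M_def by simp
      have "(\<Sum>a\<in>UNIV. n a) = (\<Sum>a\<in>T. n a)"
        by (rule sum.mono_neutral_right) (auto simp: T_def)
      also have "\<dots> \<le> card T * M" using nM sum_bounded_above[of T n M] by simp
      finally have cTM: "card A \<le> card T * M" using cA by simp
      have Td: "card T \<le> d" unfolding d_def by (rule card_mono) auto
      have "0 < real d * N" using d0 N0 by simp
      then have "0 < real (card A)" using c2 by linarith
      then have cA0: "0 < card A" by simp
      have "M > 0"
      proof (rule ccontr)
        assume "\<not> M > 0"
        then have "M = 0" by simp
        then show False using cTM cA0 by simp
      qed
      then have bT: "b \<in> T" unfolding T_def using b by simp
      have T1: "card T \<ge> 1" using bT proof -
        have "card T > 0" using bT by (subst card_gt_0_iff) auto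
        then show ?thesis by simp
      qed
      have "real (card A) \<le> real (card T * M)" using cTM by (simp only: of_nat_le_iff)
      then have "real (card A) \<le> real (card T) * real M" by simp
      then have "real d * N \<le> 2 * (real (card T) * real M)" using c2 by linarith
      also have "\<dots> \<le> 2 * (real d * real M)" using Td by (simp add: mult_right_mono)
      finally have NM: "N \<le> 2 * real M" using d0 by simp
      define Ab where "Ab = {z\<in>A. z i = b}"
      have Absub: "Ab \<subseteq> Gr I (z0(i := b))" using A insert.hyps unfolding Ab_def Gr_def by auto
      have cAb: "card Ab = M" unfolding Ab_def using b n_def by simp
      have IH: "real ((d - 1) * k) - real_of_int (aff_dim (sigma ` Ab)) \<le> 2 * real d * ((N - real M) / N)"
      proof -
        have "real CARD('d) ^ card I \<le> 2 * real (card Ab)" using NM cAb unfolding N_def d_def by simp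
        from insert.IH[rule_format, OF Absub this] show ?thesis
          unfolding cAb[symmetric] d_def N_def k_def .
      qed
      define P where "P = (\<lambda>a. SOME z. z \<in> A \<and> z i = a)"
      have PA: "P a \<in> A \<and> P a i = a" if "a \<in> T" for a
      proof -
        have "0 < card {z\<in>A. z i = a}" using that unfolding T_def n_def by simp
        then have "{z\<in>A. z i = a} \<noteq> {}" using card_gt_0_iff by blast
        then have "\<exists>z. z \<in> A \<and> z i = a" by blast
        then show ?thesis unfolding P_def by (rule someI_ex)
      qed
      have ext: "aff_dim (sigma ` (Ab \<union> P ` (T - {b}))) = aff_dim (sigma ` Ab) + int (card (T - {b}))"
        by (rule ext_dim) (auto simp: PA Ab_def)
      have "Ab \<union> P ` (T - {b}) \<subseteq> A" using PA unfolding Ab_def by auto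
      then have "aff_dim (sigma ` (Ab \<union> P ` (T - {b}))) \<le> aff_dim (sigma ` A)"
        by (intro aff_dim_subset image_mono)
      moreover have "card (T - {b}) = card T - 1" using bT by simp
      ultimately have dimA: "real_of_int (aff_dim (sigma ` Ab)) + real (card T) - 1 \<le> real_of_int (aff_dim (sigma ` A))"
        using ext T1 by (simp add: of_nat_diff)
      define x where "x = real_of_int (aff_dim (sigma ` Ab))"
      define y where "y = real_of_int (aff_dim (sigma ` A))"
      define t where "t = real (card T)"
      define C where "C = real (card A)"
      define D where "D = real d"
      have D1: "D \<ge> 1" unfolding D_def using d0 by simp
      have tD: "t \<le> D" unfolding t_def D_def using Td by simp
      have CtM: "C \<le> t * real M"
      proof -
        have "real (card A) \<le> real (card T * M)" using cTM by (simp only: of_nat_le_iff)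
        then show ?thesis unfolding C_def t_def by simp
      qed
      have yx: "x + t - 1 \<le> y" using dimA unfolding x_def y_def t_def .
      have IH': "((D - 1) * real k - x) * N \<le> 2 * D * (N - real M)"
      proof -
        have r: "real (d - 1) = real d - 1" using d0 by (simp add: of_nat_diff)
        have eq: "real ((d - 1) * k) = (real d - 1) * real k" unfolding of_nat_mult r ..
        have "(D - 1) * real k - x \<le> 2 * D * (N - real M) / N" using IH[unfolded eq] unfolding x_def D_def by simp
        then show ?thesis by (simp add: pos_le_divide_eq[OF N0])
      qed
      have "(D - 1) * (real k + 1) - y \<le> ((D - 1) * real k - x) + (D - t)" using yx by (simp add: algebra_simps)
      then have "((D - 1) * (real k + 1) - y) * N \<le> (((D - 1) * real k - x) + (D - t)) * N"
        using N0 by (intro mult_right_mono) auto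
      also have "\<dots> = ((D - 1) * real k - x) * N + (D - t) * N" by (simp add: distrib_right)
      also have "\<dots> \<le> 2 * D * (N - real M) + (D - t) * (2 * real M)"
        using IH' NM tD by (intro add_mono mult_left_mono) auto
      also have "\<dots> = 2 * (D * N) - 2 * (t * real M)" by (simp add: algebra_simps)
      also have "\<dots> \<le> 2 * (D * N - C)" using CtM by simp
      finally have fin: "((D - 1) * (real k + 1) - y) * N \<le> 2 * (D * N - C)" .
      have e1: "real ((CARD('d) - 1) * card (insert i I)) = (D - 1) * (real k + 1)"
      proof -
        have r: "real (d - 1) = real d - 1" using d0 by (simp add: of_nat_diff)
        show ?thesis unfolding cI of_nat_mult r[unfolded d_def] D_def d_def by simp
      qed
      have e2: "real CARD('d) ^ card (insert i I) = D * N"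
        using cI unfolding D_def N_def d_def k_def by simp
      have e3: "(D - 1) * (real k + 1) - y \<le> 2 * D * ((D * N - C) / (D * N))"
      proof -
        have e: "2 * D * ((D * N - C) / (D * N)) = 2 * (D * N - C) / N" using D1 N0 by (simp add: field_simps)
        show ?thesis unfolding e using fin by (simp add: pos_le_divide_eq[OF N0])
      qed
      show "real ((CARD('d) - 1) * card (insert i I)) - real_of_int (aff_dim (sigma ` A))
        \<le> 2 * real CARD('d) * ((real CARD('d) ^ card (insert i I) - real (card A)) / real CARD('d) ^ card (insert i I))"
        using e3 unfolding e1 e2 y_def C_def D_def d_def .
    qed
  qed
qed


theorem lemma3:
  fixes A :: "('m::finite \<Rightarrow> 'd::finite) set"
  assumes "DAff A = A"
    and "real (card A) / real CARD('d) ^ CARD('m) \<ge> 1 / 2"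
  shows "real_of_int (aff_dim (Aff (UNIV :: ('m \<Rightarrow> 'd) set))) - real_of_int (aff_dim (Aff A))
         \<le> 2 * real CARD('d) * ((real CARD('d) ^ CARD('m) - real (card A)) / real CARD('d) ^ CARD('m))"
proof -
  define z0 :: "'m \<Rightarrow> 'd" where "z0 = (\<lambda>_. undefined)"
  have G: "A \<subseteq> Gr (UNIV::'m set) z0" unfolding Gr_def by auto
  have pos: "real CARD('d) ^ CARD('m) > 0" by simp
  have c: "real CARD('d) ^ card (UNIV::'m set) \<le> 2 * real (card A)"
    using assms(2) pos by (simp add: field_simps)
  have m: "real ((CARD('d) - 1) * card (UNIV::'m set)) - real_of_int (aff_dim (sigma ` A))
    \<le> 2 * real CARD('d) * ((real CARD('d) ^ card (UNIV::'m set) - real (card A)) / real CARD('d) ^ card (UNIV::'m set))"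
    using main G c by blast
  have u: "real_of_int (aff_dim (sigma ` (UNIV::('m \<Rightarrow> 'd) set))) \<le> real ((CARD('d) - 1) * CARD('m))"
    using upper[where 'm='m and 'd='d] by (metis of_int_le_iff of_int_of_nat_eq)
  show ?thesis using m u unfolding Aff_def aff_dim_affine_hull by simp
qed

end
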